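(* For every process term $p$ and every $d\in\mathbb{D}$: $[\![p]\!]\le d$ if and only if $(\mathbb{D},d)\models^a\varphi_p$.
   Context: Fix a finite set $\mathrm{Act}$ of events. For a dcpo $D$, $K(D)$ denotes its compact elements; a bifinite (SFP) domain is an algebraic dcpo in which for each finite $F\subseteq K(D)$ iterated minimal-upper-bound sets are finite and in $K(D)$ and every upper bound of $F$ is above a minimal upper bound. Scott topology: sets $U={\uparrow}(U\cap K(D))$; Lawson topology generated by ${\uparrow}k\setminus{\uparrow}l$, $k,l\in K(D)$. The mixed powerdomain $\mathcal{M}(D)$: pairs $(L,U)$, $L$ Scott-closed, $U$ Lawson-closed upper, $L={\downarrow}(L\cap U)$, ordered by $(L,U)\le(L',U')$ iff $L\subseteq L'$ and $U'\subseteq U$. $\mathbb{D}$ is the initial solution over bifinite domains of $\mathbb{D}\cong\prod_{\alpha\in\mathrm{Act}}\mathcal{M}(\mathbb{D})$, $d=((L^d_\alpha,U^d_\alpha))_\alpha$, viewed as a mixed transition system $(\mathbb{D},\mathbb{R}^a,\mathbb{R}^c)$ with $(d,\alpha,d')\in\mathbb{R}^a$ iff $d'\in L^d_\alpha$ and $(d,\alpha,d')\in\mathbb{R}^c$ iff $d'\in U^d_\alpha$. Hennessy–Milner logic: $\varphi::=tt\mid\neg\varphi\mid\langle\alpha\rangle\varphi\mid\varphi\wedge\varphi$; $[\alpha]\varphi:=\neg\langle\alpha\rangle\neg\varphi$, $\varphi\vee\psi:=\neg(\neg\varphi\wedge\neg\psi)$; empty conjunction is $tt$, empty disjunction is $\neg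 tt$. For $m\in\{a,c\}$ ($\neg a=c$, $\neg c=a$): $(\mathbb{D},d)\models^m tt$; $(\mathbb{D},d)\models^m\neg\varphi$ iff not $(\mathbb{D},d)\models^{\neg m}\varphi$; $(\mathbb{D},d)\models^m\langle\alpha\rangle\varphi$ iff $(\mathbb{D},d')\models^m\varphi$ for some $(d,\alpha,d')\in\mathbb{R}^m$; $\wedge$ componentwise. Process terms: $p::=\mathbf{0}\mid\bot\mid\alpha_{tt}.p\mid\alpha_\bot.p\mid p+p$ ($\alpha\in\mathrm{Act}$; neither summand of $+$ is $\mathbf{0}$ or $\bot$). Denotations: $[\![\mathbf{0}]\!]=((\emptyset,\emptyset))_\alpha$; $[\![\bot]\!]=((\emptyset,\mathbb{D}))_\alpha$; $[\![\alpha_{tt}.p]\!]$ has $\alpha$-component $({\downarrow}[\![p]\!],{\uparrow}[\![p]\!])$ and $(\emptyset,\emptyset)$ for $\beta\ne\alpha$; $[\![\alpha_\bot.p]\!]$ has $\alpha$-component $(\emptyset,{\uparrow}[\![p]\!])$ and $(\emptyset,\emptyset)$ for $\beta\ne\alpha$; $[\![p+q]\!]$ is the componentwise union of the $L$'s and of the $U$'s. Transitions: $\bot\xrightarrow{\gamma}_\bot\bot$ for all $\gamma$; $\alpha_{tt}.p\xrightarrow{\alpha}_{tt}p$; $\alpha_\bot.p\xrightarrow{\alpha}_\bot p$; if $p\xrightarrow{\alpha}_v p'$ then $p+q\xrightarrow{\alpha}_v p'$ and $q+p\xrightarrow{\alpha}_v p'$. Formulas: $\varphi_{\mathbf{0}}=\bigwedge_\alpha\neg\langle\alpha\rangle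 tt$; $\varphi_\bot=tt$; $\varphi_{\alpha_{tt}.p}=\langle\alpha\rangle\varphi_p\wedge[\alpha]\varphi_p\wedge\bigwedge_{\beta\ne\alpha}\neg\langle\beta\rangle tt$; $\varphi_{\alpha_\bot.p}=[\alpha]\varphi_p\wedge\bigwedge_{\beta\ne\alpha}\neg\langle\beta\rangle tt$; $\varphi_{p+q}=\bigwedge\{\langle\alpha\rangle\varphi_{r'} : p+q\xrightarrow{\alpha}_{tt}r'\}\wedge\bigwedge_{\alpha}[\alpha]\bigvee\{\varphi_{r'} : p+q\xrightarrow{\alpha}_v r',\ v\in\{\bot,tt\}\}$. *)

theory Defs
  imports Complex_Main
begin

definition directed :: "'d::order set \<Rightarrow> bool" where
  "directed S \<longleftrightarrow> S \<noteq> {} \<and> (\<forall>x\<in>S. \<forall>y\<in>S. \<exists>z\<in>S. x \<le> z \<and> y \<le> z)"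

definition is_ub :: "'d::order set \<Rightarrow> 'd \<Rightarrow> bool" where
  "is_ub S u \<longleftrightarrow> (\<forall>x\<in>S. x \<le> u)"

definition is_lub :: "'d::order set \<Rightarrow> 'd \<Rightarrow> bool" where
  "is_lub S s \<longleftrightarrow> is_ub S s \<and> (\<forall>u. is_ub S u \<longrightarrow> s \<le> u)"

definition dcpo :: "'d::order itself \<Rightarrow> bool" where
  "dcpo _ \<longleftrightarrow> (\<forall>S::'d set. directed S \<longrightarrow> (\<exists>s. is_lub S s))"

definition compact_el :: "'d::order \<Rightarrow> bool" where
  "compact_el k \<longleftrightarrow> (\<forall>S s. directed S \<longrightarrow> is_lub S s \<longrightarrow> k \<le> s \<longrightarrow> (\<exists>x\<in>S. k \<le> x))"

definition K :: "'d::order set" where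
  "K = {k. compact_el k}"

definition algebraic :: "'d::order itself \<Rightarrow> bool" where
  "algebraic _ \<longleftrightarrow> (\<forall>x::'d. directed {k\<in>K. k \<le> x} \<and> is_lub {k\<in>K. k \<le> x} x)"

definition mub :: "'d::order set \<Rightarrow> 'd set" where
  "mub S = {u. is_ub S u \<and> (\<forall>v. is_ub S v \<longrightarrow> v \<le> u \<longrightarrow> v = u)}"

inductive_set mub_closure :: "'d::order set \<Rightarrow> 'd set" for F :: "'d set" where
  base: "x \<in> F \<Longrightarrow> x \<in> mub_closure F"
| step: "finite G \<Longrightarrow> \<forall>g\<in>G. g \<in> mub_closure F \<Longrightarrow> x \<in> mub G \<Longrightarrow> x \<in> mub_closure F"

definition bifinite :: "'d::order itself \<Rightarrow> bool" where
  "bifinite T \<longleftrightarrow> dcpo T \<and> algebraic T \<and>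
     (\<forall>F::'d set. finite F \<and> F \<subseteq> K \<longrightarrow>
        finite (mub_closure F) \<and> mub_closure F \<subseteq> K \<and>
        (\<forall>u. is_ub F u \<longrightarrow> (\<exists>m\<in>mub F. m \<le> u)))"

definition up :: "'d::order \<Rightarrow> 'd set" where "up x = {y. x \<le> y}"
definition down :: "'d::order \<Rightarrow> 'd set" where "down x = {y. y \<le> x}"

definition upper_set :: "'d::order set \<Rightarrow> bool" where
  "upper_set U \<longleftrightarrow> (\<forall>x y. x \<in> U \<longrightarrow> x \<le> y \<longrightarrow> y \<in> U)"

definition scott_open :: "'d::order set \<Rightarrow> bool" where
  "scott_open U \<longleftrightarrow> U = (\<Union>k\<in>U \<inter> K. up k)"

definition scott_closed :: "'d::order set \<Rightarrow> bool" where
  "scott_closed L \<longleftrightarrow> scott_open (- L)"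

definition lawson_open :: "'d::order set \<Rightarrow> bool" where
  "lawson_open = generate_topology {up k - up l | k l. k \<in> K \<and> l \<in> K}"

definition lawson_closed :: "'d::order set \<Rightarrow> bool" where
  "lawson_closed U \<longleftrightarrow> lawson_open (- U)"

definition mixedPD :: "('d::order set \<times> 'd set) set" where
  "mixedPD = {(L, U). scott_closed L \<and> lawson_closed U \<and> upper_set U \<and>
                       L = {x. \<exists>y\<in>L \<inter> U. x \<le> y}}"

text \<open>dec is an order isomorphism D \<cong> \<Prod>_{\<alpha>\<in>Act} M(D), with the mixed (Egli-Milner-like)
  order on M(D): (L,U) \<le> (L',U') iff L \<subseteq> L' and U' \<subseteq> U.\<close>
definition mixed_iso :: "('d::order \<Rightarrow> ('act \<Rightarrow> 'd set \<times> 'd set)) \<Rightarrow> bool" where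
  "mixed_iso dec \<longleftrightarrow> bij_betw dec UNIV {f. \<forall>\<alpha>. f \<alpha> \<in> mixedPD} \<and>
     (\<forall>x y. x \<le> y \<longleftrightarrow> (\<forall>\<alpha>. fst (dec x \<alpha>) \<subseteq> fst (dec y \<alpha>) \<and> snd (dec y \<alpha>) \<subseteq> snd (dec x \<alpha>)))"

datatype 'act form = TT | Neg "'act form" | Dia 'act "'act form" | Conj "'act form" "'act form"

definition Box :: "'act \<Rightarrow> 'act form \<Rightarrow> 'act form" where
  "Box \<alpha> \<phi> = Neg (Dia \<alpha> (Neg \<phi>))"

definition Disj :: "'act form \<Rightarrow> 'act form \<Rightarrow> 'act form" where
  "Disj \<phi> \<psi> = Neg (Conj (Neg \<phi>) (Neg \<psi>))"

definition BigConj :: "'act form list \<Rightarrow> 'act form" where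
  "BigConj xs = foldr Conj xs TT"

definition BigDisj :: "'act form list \<Rightarrow> 'act form" where
  "BigDisj xs = Neg (BigConj (map Neg xs))"

text \<open>Mode True = a (may / R^a via L), mode False = c (must / R^c via U).\<close>
definition R :: "('d \<Rightarrow> ('act \<Rightarrow> 'd set \<times> 'd set)) \<Rightarrow> bool \<Rightarrow> 'd \<Rightarrow> 'act \<Rightarrow> 'd \<Rightarrow> bool" where
  "R dec m d \<alpha> d' \<longleftrightarrow> d' \<in> (if m then fst (dec d \<alpha>) else snd (dec d \<alpha>))"

fun sat :: "('d \<Rightarrow> ('act \<Rightarrow> 'd set \<times> 'd set)) \<Rightarrow> bool \<Rightarrow> 'd \<Rightarrow> 'act form \<Rightarrow> bool" where
  "sat dec m d TT = True"
| "sat dec m d (Neg \<phi>) = (\<not> sat dec (\<not> m) d \<phi>)"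
| "sat dec m d (Dia \<alpha> \<phi>) = (\<exists>d'. R dec m d \<alpha> d' \<and> sat dec m d' \<phi>)"
| "sat dec m d (Conj \<phi> \<psi>) = (sat dec m d \<phi> \<and> sat dec m d \<psi>)"

datatype 'act proc = PNil | PBot | PreT 'act "'act proc" | PreB 'act "'act proc"
  | PSum "'act proc" "'act proc"

fun wf_proc :: "'act proc \<Rightarrow> bool" where
  "wf_proc PNil = True"
| "wf_proc PBot = True"
| "wf_proc (PreT \<alpha> p) = wf_proc p"
| "wf_proc (PreB \<alpha> p) = wf_proc p"
| "wf_proc (PSum p q) = (p \<noteq> PNil \<and> p \<noteq> PBot \<and> q \<noteq> PNil \<and> q \<noteq> PBot \<and> wf_proc p \<and> wf_proc q)"

fun den :: "('d::order \<Rightarrow> ('act \<Rightarrow> 'd set \<times> 'd set)) \<Rightarrow> 'act proc \<Rightarrow> 'd" where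
  "den dec PNil = inv dec (\<lambda>\<alpha>. ({}, {}))"
| "den dec PBot = inv dec (\<lambda>\<alpha>. ({}, UNIV))"
| "den dec (PreT \<alpha> p) = inv dec (\<lambda>\<beta>. if \<beta> = \<alpha> then (down (den dec p), up (den dec p)) else ({}, {}))"
| "den dec (PreB \<alpha> p) = inv dec (\<lambda>\<beta>. if \<beta> = \<alpha> then ({}, up (den dec p)) else ({}, {}))"
| "den dec (PSum p q) = inv dec (\<lambda>\<alpha>. (fst (dec (den dec p) \<alpha>) \<union> fst (dec (den dec q) \<alpha>),
                                       snd (dec (den dec p) \<alpha>) \<union> snd (dec (den dec q) \<alpha>)))"

text \<open>Transitions p --\<alpha>-->_v p' as a list of triples (\<alpha>, v, p'), v = True for tt, False for bottom.
  Act is enumerated by the enum class.\<close>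
fun trans :: "'act::enum proc \<Rightarrow> ('act \<times> bool \<times> 'act proc) list" where
  "trans PNil = []"
| "trans PBot = map (\<lambda>\<gamma>. (\<gamma>, False, PBot)) enum_class.enum"
| "trans (PreT \<alpha> p) = [(\<alpha>, True, p)]"
| "trans (PreB \<alpha> p) = [(\<alpha>, False, p)]"
| "trans (PSum p q) = trans p @ trans q"

lemma trans_size: "x \<in> set (trans p) \<Longrightarrow> size (snd (snd x)) \<le> size p"
  by (induction p) auto

function phi :: "'act::enum proc \<Rightarrow> 'act form" where
  "phi PNil = BigConj (map (\<lambda>\<alpha>. Neg (Dia \<alpha> TT)) enum_class.enum)"
| "phi PBot = TT"
| "phi (PreT \<alpha> p) = Conj (Conj (Dia \<alpha> (phi p)) (Box \<alpha> (phi p)))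
                        (BigConj (map (\<lambda>\<beta>. Neg (Dia \<beta> TT)) (filter (\<lambda>\<beta>. \<beta> \<noteq> \<alpha>) enum_class.enum)))"
| "phi (PreB \<alpha> p) = Conj (Box \<alpha> (phi p))
                        (BigConj (map (\<lambda>\<beta>. Neg (Dia \<beta> TT)) (filter (\<lambda>\<beta>. \<beta> \<noteq> \<alpha>) enum_class.enum)))"
| "phi (PSum p q) = Conj
     (BigConj (map (\<lambda>t. Dia (fst t) (phi (snd (snd t))))
                   (filter (\<lambda>t. fst (snd t)) (trans (PSum p q)))))
     (BigConj (map (\<lambda>\<alpha>. Box \<alpha> (BigDisj (map (\<lambda>t. phi (snd (snd t)))
                                          (filter (\<lambda>t. fst t = \<alpha>) (trans (PSum p q))))))
                   enum_class.enum))"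
  by pat_completeness auto
termination
proof (relation "measure size")
  fix p q :: "'a::enum proc" and t
  assume "t \<in> set (filter (\<lambda>t. fst (snd t)) (trans (PSum p q)))"
  then have "t \<in> set (trans p) \<or> t \<in> set (trans q)" by auto
  then show "(snd (snd t), PSum p q) \<in> measure size"
    using trans_size[of t p] trans_size[of t q] by auto
next
  fix p q :: "'a::enum proc" and t and \<alpha> :: 'a
  assume "t \<in> set (filter (\<lambda>t. fst t = \<alpha>) (trans (PSum p q)))"
  then have "t \<in> set (trans p) \<or> t \<in> set (trans q)" by auto
  then show "(snd (snd t), PSum p q) \<in> measure size"
    using trans_size[of t p] trans_size[of t q] by auto
qed auto

end

theory Submission
  imports Defs
begin

lemma alg_dir: "bifinite TYPE('d::order) \<Longrightarrow> directed {k\<in>K. k \<le> (x::'d)}"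
  unfolding bifinite_def algebraic_def by blast

lemma alg_lub: "bifinite TYPE('d::order) \<Longrightarrow> is_lub {k\<in>K. k \<le> (x::'d)} x"
  unfolding bifinite_def algebraic_def by blast

lemma alg_ex: assumes "bifinite TYPE('d::order)" shows "\<exists>k\<in>K. k \<le> (x::'d)"
  using alg_dir[OF assms, of x] unfolding directed_def by blast

lemma alg_below: assumes "bifinite TYPE('d::order)" and "\<not> (x::'d) \<le> y"
  shows "\<exists>k\<in>K. k \<le> x \<and> \<not> k \<le> y"
proof (rule ccontr)
  assume "\<not> ?thesis"
  then have "is_ub {k\<in>K. k \<le> x} y" unfolding is_ub_def by auto
  with alg_lub[OF assms(1), of x] have "x \<le> y" unfolding is_lub_def by blast
  with assms(2) show False by simp
qed

lemma scott_open_iff: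
  "scott_open (U::'d::order set) \<longleftrightarrow> (upper_set U \<and> (\<forall>y\<in>U. \<exists>k\<in>K \<inter> U. k \<le> y))"
  unfolding scott_open_def upper_set_def up_def
  apply (rule iffI)
   apply (intro conjI allI impI ballI)
    apply (metis (mono_tags, lifting) UN_iff mem_Collect_eq order_trans)
   apply blast
  apply auto
  done

lemma scott_closed_empty: assumes "bifinite TYPE('d::order)" shows "scott_closed ({}::'d set)"
  unfolding scott_closed_def scott_open_iff upper_set_def using alg_ex[OF assms] by auto

lemma scott_closed_down: assumes "bifinite TYPE('d::order)" shows "scott_closed (down (x::'d))"
  unfolding scott_closed_def scott_open_iff upper_set_def down_def
proof (intro conjI allI impI ballI)
  fix a b :: 'd assume "a \<in> - {y. y \<le> x}" "a \<le> b" then show "b \<in> - {y. y \<le> x}"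
    by (auto dest: order_trans)
next
  fix y assume "y \<in> - {y. y \<le> x}"
  then obtain k where "k \<in> K" "k \<le> y" "\<not> k \<le> x" using alg_below[OF assms, of y x] by auto
  then show "\<exists>k\<in>K \<inter> - {y. y \<le> x}. k \<le> y" by auto
qed

lemma scott_closed_Un: assumes "bifinite TYPE('d::order)" and "scott_closed (A::'d set)" "scott_closed B"
  shows "scott_closed (A \<union> B)"
  using assms(2,3) unfolding scott_closed_def scott_open_iff upper_set_def
proof (intro conjI allI impI ballI)
  assume a: "(\<forall>x y. x \<in> - A \<longrightarrow> x \<le> y \<longrightarrow> y \<in> - A) \<and> (\<forall>y\<in>- A. \<exists>k\<in>K \<inter> - A. k \<le> y)"
    and b: "(\<forall>x y. x \<in> - B \<longrightarrow> x \<le> y \<longrightarrow> y \<in> - B) \<and> (\<forall>y\<in>- B. \<exists>k\<in>K \<inter> - B. k \<le> y)"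
  {
    fix x y assume "x \<in> - (A \<union> B)" "x \<le> y" then show "y \<in> - (A \<union> B)" using a b by blast
  next
    fix y assume y: "y \<in> - (A \<union> B)"
    then obtain k1 k2 where k: "k1 \<in> K" "k1 \<notin> A" "k1 \<le> y" "k2 \<in> K" "k2 \<notin> B" "k2 \<le> y"
      using a b by blast
    then obtain k where "k \<in> K" "k \<le> y" "k1 \<le> k" "k2 \<le> k"
      using alg_dir[OF assms(1), of y] unfolding directed_def by blast
    then show "\<exists>k\<in>K \<inter> - (A \<union> B). k \<le> y" using a b k by blast
  }
qed

lemma lawson_closed_empty: "lawson_closed {}"
  unfolding lawson_closed_def lawson_open_def by (simp add: generate_topology.UNIV)

lemma lawson_closed_UNIV: "lawson_closed UNIV"
  unfolding lawson_closed_def lawson_open_def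
  using generate_topology.UN[of "{}"] by simp

lemma lawson_closed_Un: "lawson_closed A \<Longrightarrow> lawson_closed B \<Longrightarrow> lawson_closed (A \<union> B)"
  unfolding lawson_closed_def lawson_open_def
  using generate_topology.Int by fastforce

lemma lawson_closed_up: assumes "bifinite TYPE('d::order)" shows "lawson_closed (up (x::'d))"
proof -
  let ?F = "{up l - up k | k l. k \<in> K \<and> l \<in> K \<and> k \<le> x}"
  have eq: "- up x = \<Union>?F"
  proof
    show "- up x \<subseteq> \<Union>?F"
    proof
      fix y assume "y \<in> - up x"
      then have "\<not> x \<le> y" by (simp add: up_def)
      then obtain k where k: "k \<in> K" "k \<le> x" "\<not> k \<le> y" using alg_below[OF assms] by blast
      obtain l where l: "l \<in> K" "l \<le> y" using alg_ex[OF assms] by blast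
      have "y \<in> up l - up k" using k l by (simp add: up_def)
      then show "y \<in> \<Union>?F" using k l by blast
    qed
  next
    show "\<Union>?F \<subseteq> - up x"
      by (auto simp: up_def dest: order_trans)
  qed
  have "generate_topology {up k - up l | k l. k \<in> K \<and> l \<in> K} (\<Union>?F)"
    by (rule generate_topology.UN) (auto intro: generate_topology.Basis)
  then show ?thesis unfolding lawson_closed_def lawson_open_def eq .
qed

lemma mixed_empty: "bifinite TYPE('d::order) \<Longrightarrow> ({}, {}::'d set) \<in> mixedPD"
  unfolding mixedPD_def upper_set_def
  by (auto simp: scott_closed_empty lawson_closed_empty)

lemma mixed_bot: "bifinite TYPE('d::order) \<Longrightarrow> ({}, UNIV::'d set) \<in> mixedPD"
  unfolding mixedPD_def upper_set_def
  by (auto simp: scott_closed_empty lawson_closed_UNIV)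

lemma mixed_T: assumes "bifinite TYPE('d::order)" shows "(down x, up (x::'d)) \<in> mixedPD"
proof -
  have a: "scott_closed (down x)" "lawson_closed (up x)" using scott_closed_down[OF assms] lawson_closed_up[OF assms] by auto
  have b: "upper_set (up x)" unfolding upper_set_def up_def by (auto dest: order_trans)
  have c: "down x = {z. \<exists>y\<in>down x \<inter> up x. z \<le> y}" unfolding down_def up_def by auto
  show ?thesis unfolding mixedPD_def using a b c by blast
qed

lemma mixed_B: assumes "bifinite TYPE('d::order)" shows "({}, up (x::'d)) \<in> mixedPD"
proof -
  have a: "scott_closed ({}::'d set)" "lawson_closed (up x)" using scott_closed_empty[OF assms] lawson_closed_up[OF assms] by auto
  have b: "upper_set (up x)" unfolding upper_set_def up_def by (auto dest: order_trans)
  show ?thesis unfolding mixedPD_def using a b by blast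
qed

lemma mixed_lower: assumes "(L, U) \<in> mixedPD" "y \<in> L" "x \<le> y" shows "x \<in> L"
proof -
  have e: "L = {x. \<exists>y\<in>L \<inter> U. x \<le> y}" using assms(1) unfolding mixedPD_def by blast
  then obtain z where "z \<in> L \<inter> U" "y \<le> z" using assms(2) by blast
  then have "x \<in> {x. \<exists>y\<in>L \<inter> U. x \<le> y}" using assms(3) order_trans by blast
  then show ?thesis using e by simp
qed

lemma mixed_Un: assumes "bifinite TYPE('d::order)" "(L1, U1) \<in> mixedPD" "(L2, U2::'d set) \<in> mixedPD"
  shows "(L1 \<union> L2, U1 \<union> U2) \<in> mixedPD"
proof -
  have m1: "scott_closed L1" "lawson_closed U1" "upper_set U1" "L1 = {x. \<exists>y\<in>L1 \<inter> U1. x \<le> y}"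
    using assms(2) unfolding mixedPD_def by auto
  have m2: "scott_closed L2" "lawson_closed U2" "upper_set U2" "L2 = {x. \<exists>y\<in>L2 \<inter> U2. x \<le> y}"
    using assms(3) unfolding mixedPD_def by auto
  have "scott_closed (L1 \<union> L2)" by (rule scott_closed_Un[OF assms(1) m1(1) m2(1)])
  moreover have "lawson_closed (U1 \<union> U2)" by (rule lawson_closed_Un[OF m1(2) m2(2)])
  moreover have "upper_set (U1 \<union> U2)" using m1(3) m2(3) unfolding upper_set_def by blast
  moreover have "L1 \<union> L2 = {x. \<exists>y\<in>(L1 \<union> L2) \<inter> (U1 \<union> U2). x \<le> y}"
  proof
    show "L1 \<union> L2 \<subseteq> {x. \<exists>y\<in>(L1 \<union> L2) \<inter> (U1 \<union> U2). x \<le> y}"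
    proof
      fix x assume "x \<in> L1 \<union> L2"
      then have "x \<in> {x. \<exists>y\<in>L1 \<inter> U1. x \<le> y} \<or> x \<in> {x. \<exists>y\<in>L2 \<inter> U2. x \<le> y}"
        using m1(4) m2(4) by auto
      then show "x \<in> {x. \<exists>y\<in>(L1 \<union> L2) \<inter> (U1 \<union> U2). x \<le> y}" by blast
    qed
    show "{x. \<exists>y\<in>(L1 \<union> L2) \<inter> (U1 \<union> U2). x \<le> y} \<subseteq> L1 \<union> L2"
      using mixed_lower[OF assms(2)] mixed_lower[OF assms(3)] by blast
  qed
  ultimately show ?thesis unfolding mixedPD_def by blast
qed

lemma dec_mem: assumes "mixed_iso dec" shows "dec x \<alpha> \<in> mixedPD"
proof -
  have "dec ` UNIV = {f. \<forall>\<alpha>. f \<alpha> \<in> mixedPD}" using assms unfolding mixed_iso_def bij_betw_def by (elim conjE)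
  then have "dec x \<in> {f. \<forall>\<alpha>. f \<alpha> \<in> mixedPD}" by (metis rangeI)
  then show ?thesis by simp
qed

lemma dec_inv: assumes "mixed_iso dec" "\<And>\<alpha>. f \<alpha> \<in> mixedPD" shows "dec (inv dec f) = f"
proof -
  have "dec ` UNIV = {f. \<forall>\<alpha>. f \<alpha> \<in> mixedPD}" using assms unfolding mixed_iso_def bij_betw_def by (elim conjE)
  then have "f \<in> range dec" using assms(2) by simp
  then show ?thesis by (rule f_inv_into_f)
qed

lemma le_iff: assumes "mixed_iso dec" shows "x \<le> y \<longleftrightarrow>
   (\<forall>\<alpha>. fst (dec x \<alpha>) \<subseteq> fst (dec y \<alpha>) \<and> snd (dec y \<alpha>) \<subseteq> snd (dec x \<alpha>))"
proof -
  have "\<forall>x y. x \<le> y \<longleftrightarrow> (\<forall>\<alpha>. fst (dec x \<alpha>) \<subseteq> fst (dec y \<alpha>) \<and> snd (dec y \<alpha>) \<subseteq> snd (dec x \<alpha>))"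
    using assms unfolding mixed_iso_def by (elim conjE)
  from this[rule_format, of x y] show ?thesis .
qed

lemma sat_BigConj: "sat dec m d (BigConj xs) \<longleftrightarrow> (\<forall>x\<in>set xs. sat dec m d x)"
  unfolding BigConj_def by (induction xs) auto

lemma sat_BigDisj: "sat dec m d (BigDisj xs) \<longleftrightarrow> (\<exists>x\<in>set xs. sat dec m d x)"
  unfolding BigDisj_def by (simp add: sat_BigConj)

lemma sat_Box: "sat dec m d (Box \<alpha> \<phi>) \<longleftrightarrow> (\<forall>d'. R dec (\<not> m) d \<alpha> d' \<longrightarrow> sat dec m d' \<phi>)"
  unfolding Box_def by simp

lemma dec_PNil: assumes "bifinite TYPE('d::order)" "mixed_iso (dec::'d \<Rightarrow> _)"
  shows "dec (den dec PNil) = (\<lambda>\<alpha>. ({}, {}))"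
  using dec_inv[OF assms(2)] mixed_empty[OF assms(1)] by simp

lemma dec_PBot: assumes "bifinite TYPE('d::order)" "mixed_iso (dec::'d \<Rightarrow> _)"
  shows "dec (den dec PBot) = (\<lambda>\<alpha>. ({}, UNIV))"
  using dec_inv[OF assms(2)] mixed_bot[OF assms(1)] by simp

lemma dec_PreT: assumes "bifinite TYPE('d::order)" "mixed_iso (dec::'d \<Rightarrow> _)"
  shows "dec (den dec (PreT a p)) = (\<lambda>\<beta>. if \<beta> = a then (down (den dec p), up (den dec p)) else ({}, {}))"
  using dec_inv[OF assms(2)] mixed_empty[OF assms(1)] mixed_T[OF assms(1)] by simp

lemma dec_PreB: assumes "bifinite TYPE('d::order)" "mixed_iso (dec::'d \<Rightarrow> _)"
  shows "dec (den dec (PreB a p)) = (\<lambda>\<beta>. if \<beta> = a then ({}, up (den dec p)) else ({}, {}))"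
  using dec_inv[OF assms(2)] mixed_empty[OF assms(1)] mixed_B[OF assms(1)] by simp

lemma dec_PSum: assumes "bifinite TYPE('d::order)" "mixed_iso (dec::'d \<Rightarrow> _)"
  shows "dec (den dec (PSum p q)) = (\<lambda>\<alpha>. (fst (dec (den dec p) \<alpha>) \<union> fst (dec (den dec q) \<alpha>),
                                       snd (dec (den dec p) \<alpha>) \<union> snd (dec (den dec q) \<alpha>)))"
proof -
  have "(fst (dec (den dec p) \<alpha>) \<union> fst (dec (den dec q) \<alpha>),
          snd (dec (den dec p) \<alpha>) \<union> snd (dec (den dec q) \<alpha>)) \<in> mixedPD" for \<alpha>
    using mixed_Un[OF assms(1), of "fst (dec (den dec p) \<alpha>)" "snd (dec (den dec p) \<alpha>)"
        "fst (dec (den dec q) \<alpha>)" "snd (dec (den dec q) \<alpha>)"] dec_mem[OF assms(2)] by simp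
  then show ?thesis using dec_inv[OF assms(2)] by simp
qed

lemma bot_le: assumes "bifinite TYPE('d::order)" "mixed_iso (dec::'d \<Rightarrow> _)"
  shows "den dec PBot \<le> y"
  using le_iff[OF assms(2)] dec_PBot[OF assms] by simp

lemma dec_den: assumes "bifinite TYPE('d::order)" "mixed_iso (dec::'d \<Rightarrow> ('act::enum \<Rightarrow> _))"
  shows "dec (den dec p) \<alpha> = ({y. \<exists>r. (\<alpha>, True, r) \<in> set (trans p) \<and> y \<le> den dec r},
                              {y. \<exists>v r. (\<alpha>, v, r) \<in> set (trans p) \<and> den dec r \<le> y})"
proof (induction p)
  case PNil
  then show ?case using dec_PNil[OF assms] by simp
next
  case PBot
  have t: "(\<alpha>, False, PBot) \<in> set (trans (PBot::'act proc))" using in_enum[of \<alpha>] by auto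
  have "{y. \<exists>v r. (\<alpha>, v, r) \<in> set (trans (PBot::'act proc)) \<and> den dec r \<le> y} = UNIV"
    using t bot_le[OF assms] by blast
  moreover have "{y. \<exists>r. (\<alpha>, True, r) \<in> set (trans (PBot::'act proc)) \<and> y \<le> den dec r} = {}"
    by auto
  ultimately show ?case using dec_PBot[OF assms] by simp
next
  case (PreT a p)
  then show ?case using dec_PreT[OF assms] by (auto simp: up_def down_def)
next
  case (PreB a p)
  then show ?case using dec_PreB[OF assms] by (auto simp: up_def down_def)
next
  case (PSum p q)
  then show ?case using dec_PSum[OF assms] by auto
qed

lemma lower_L: assumes "mixed_iso dec" "y \<in> fst (dec d \<alpha>)" "x \<le> y" shows "x \<in> fst (dec d \<alpha>)"
  using mixed_lower[of "fst (dec d \<alpha>)" "snd (dec d \<alpha>)" y x] dec_mem[OF assms(1), of d \<alpha>] assms(2,3) by simp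

lemma not_dia_TT: "sat dec True d (Neg (Dia \<beta> TT)) \<longleftrightarrow> snd (dec d \<beta>) = {}"
  by (auto simp: R_def)

theorem main_aux:
  fixes dec :: "'d::order \<Rightarrow> ('act::enum \<Rightarrow> 'd set \<times> 'd set)"
  assumes A: "bifinite TYPE('d)" and B: "mixed_iso dec"
  shows "\<forall>d. den dec p \<le> d \<longleftrightarrow> sat dec True d (phi p)"
proof (induction p rule: measure_induct_rule[where f=size])
  case (less p)
  show ?case
  proof (cases p)
    case PNil
    show ?thesis unfolding PNil
    proof (intro allI)
      fix d
      have l: "den dec PNil \<le> d \<longleftrightarrow> (\<forall>\<alpha>. snd (dec d \<alpha>) = {})"
        unfolding le_iff[OF B] dec_PNil[OF A B] by simp
      have r: "sat dec True d (phi PNil) \<longleftrightarrow> (\<forall>\<alpha>\<in>set enum_class.enum. snd (dec d \<alpha>) = {})"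
        by (simp only: phi.simps sat_BigConj not_dia_TT set_map ball_simps)
      show "den dec PNil \<le> d \<longleftrightarrow> sat dec True d (phi PNil)" unfolding l r using in_enum by blast
    qed
  next
    case PBot
    show ?thesis unfolding PBot using bot_le[OF A B] by simp
  next
    case (PreT a q)
    have IH: "\<And>d. den dec q \<le> d \<longleftrightarrow> sat dec True d (phi q)" using less PreT by auto
    show ?thesis
    proof (intro allI)
      fix d
      have oth: "sat dec True d (BigConj (map (\<lambda>\<beta>. Neg (Dia \<beta> TT)) (filter (\<lambda>\<beta>. \<beta> \<noteq> a) enum_class.enum)))
          \<longleftrightarrow> (\<forall>\<beta>. \<beta> \<noteq> a \<longrightarrow> snd (dec d \<beta>) = {})"
        by (auto simp: sat_BigConj not_dia_TT in_enum simp del: sat.simps)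
      have dia: "sat dec True d (Dia a (phi q)) \<longleftrightarrow> down (den dec q) \<subseteq> fst (dec d a)"
      proof -
        have "sat dec True d (Dia a (phi q)) \<longleftrightarrow> (\<exists>d'\<in>fst (dec d a). den dec q \<le> d')"
          using IH by (auto simp: R_def)
        also have "\<dots> \<longleftrightarrow> down (den dec q) \<subseteq> fst (dec d a)"
          unfolding down_def using lower_L[OF B, of _ d a] by blast
        finally show ?thesis .
      qed
      have box: "sat dec True d (Box a (phi q)) \<longleftrightarrow> snd (dec d a) \<subseteq> up (den dec q)"
        using IH by (auto simp: sat_Box R_def up_def)
      have le: "den dec (PreT a q) \<le> d \<longleftrightarrow> down (den dec q) \<subseteq> fst (dec d a) \<and> snd (dec d a) \<subseteq> up (den dec q)
          \<and> (\<forall>\<beta>. \<beta> \<noteq> a \<longrightarrow> snd (dec d \<beta>) = {})"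
        unfolding le_iff[OF B] dec_PreT[OF A B] by auto
      show "den dec p \<le> d \<longleftrightarrow> sat dec True d (phi p)"
        unfolding PreT le phi.simps sat.simps(4) dia box oth by blast
    qed
  next
    case (PreB a q)
    have IH: "\<And>d. den dec q \<le> d \<longleftrightarrow> sat dec True d (phi q)" using less PreB by auto
    show ?thesis
    proof (intro allI)
      fix d
      have oth: "sat dec True d (BigConj (map (\<lambda>\<beta>. Neg (Dia \<beta> TT)) (filter (\<lambda>\<beta>. \<beta> \<noteq> a) enum_class.enum)))
          \<longleftrightarrow> (\<forall>\<beta>. \<beta> \<noteq> a \<longrightarrow> snd (dec d \<beta>) = {})"
        by (auto simp: sat_BigConj not_dia_TT in_enum simp del: sat.simps)
      have box: "sat dec True d (Box a (phi q)) \<longleftrightarrow> snd (dec d a) \<subseteq> up (den dec q)"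
        using IH by (auto simp: sat_Box R_def up_def)
      have le: "den dec (PreB a q) \<le> d \<longleftrightarrow> snd (dec d a) \<subseteq> up (den dec q)
          \<and> (\<forall>\<beta>. \<beta> \<noteq> a \<longrightarrow> snd (dec d \<beta>) = {})"
        unfolding le_iff[OF B] dec_PreB[OF A B] by auto
      show "den dec p \<le> d \<longleftrightarrow> sat dec True d (phi p)"
        unfolding PreB le phi.simps sat.simps(4) box oth by blast
    qed
  next
    case (PSum p1 p2)
    define T where "T = trans (PSum p1 p2)"
    have IH: "\<And>d a v r. (a, v, r) \<in> set T \<Longrightarrow> den dec r \<le> d \<longleftrightarrow> sat dec True d (phi r)"
    proof -
      fix d a v r assume "(a, v, r) \<in> set T"
      then have "(a, v, r) \<in> set (trans p1) \<or> (a, v, r) \<in> set (trans p2)" unfolding T_def by simp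
      then have "size r < size p" unfolding PSum
        using trans_size[of "(a, v, r)" p1] trans_size[of "(a, v, r)" p2] by auto
      then show "den dec r \<le> d \<longleftrightarrow> sat dec True d (phi r)" using less by blast
    qed
    show ?thesis
    proof (intro allI)
      fix d
      have c1: "sat dec True d (BigConj (map (\<lambda>t. Dia (fst t) (phi (snd (snd t)))) (filter (\<lambda>t. fst (snd t)) T)))
        \<longleftrightarrow> (\<forall>a r. (a, True, r) \<in> set T \<longrightarrow> (\<exists>d'\<in>fst (dec d a). den dec r \<le> d'))"
      proof
        assume H: "sat dec True d (BigConj (map (\<lambda>t. Dia (fst t) (phi (snd (snd t)))) (filter (\<lambda>t. fst (snd t)) T)))"
        show "\<forall>a r. (a, True, r) \<in> set T \<longrightarrow> (\<exists>d'\<in>fst (dec d a). den dec r \<le> d')"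
        proof (intro allI impI)
          fix a r assume t: "(a, True, r) \<in> set T"
          have "Dia a (phi r) \<in> set (map (\<lambda>t. Dia (fst t) (phi (snd (snd t)))) (filter (\<lambda>t. fst (snd t)) T))"
            using t by force
          then have "sat dec True d (Dia a (phi r))" using H unfolding sat_BigConj by blast
          then obtain d' where "R dec True d a d'" "sat dec True d' (phi r)" by auto
          then show "\<exists>d'\<in>fst (dec d a). den dec r \<le> d'" using IH[OF t] by (auto simp: R_def)
        qed
      next
        assume H: "\<forall>a r. (a, True, r) \<in> set T \<longrightarrow> (\<exists>d'\<in>fst (dec d a). den dec r \<le> d')"
        show "sat dec True d (BigConj (map (\<lambda>t. Dia (fst t) (phi (snd (snd t)))) (filter (\<lambda>t. fst (snd t)) T)))"
          unfolding sat_BigConj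
        proof
          fix x assume "x \<in> set (map (\<lambda>t. Dia (fst t) (phi (snd (snd t)))) (filter (\<lambda>t. fst (snd t)) T))"
          then obtain a r where t: "(a, True, r) \<in> set T" and x: "x = Dia a (phi r)" by auto
          from H t obtain d' where "d' \<in> fst (dec d a)" "den dec r \<le> d'" by blast
          then show "sat dec True d x" using IH[OF t] x by (auto simp: R_def)
        qed
      qed
      have c2: "sat dec True d (BigConj (map (\<lambda>\<alpha>. Box \<alpha> (BigDisj (map (\<lambda>t. phi (snd (snd t)))
                                          (filter (\<lambda>t. fst t = \<alpha>) T)))) enum_class.enum))
        \<longleftrightarrow> (\<forall>a. \<forall>d'\<in>snd (dec d a). \<exists>v r. (a, v, r) \<in> set T \<and> den dec r \<le> d')"
      proof
        assume H: "sat dec True d (BigConj (map (\<lambda>\<alpha>. Box \<alpha> (BigDisj (map (\<lambda>t. phi (snd (snd t)))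
                                          (filter (\<lambda>t. fst t = \<alpha>) T)))) enum_class.enum))"
        show "\<forall>a. \<forall>d'\<in>snd (dec d a). \<exists>v r. (a, v, r) \<in> set T \<and> den dec r \<le> d'"
        proof (intro allI ballI)
          fix a d' assume d': "d' \<in> snd (dec d a)"
          have "Box a (BigDisj (map (\<lambda>t. phi (snd (snd t))) (filter (\<lambda>t. fst t = a) T))) \<in>
             set (map (\<lambda>\<alpha>. Box \<alpha> (BigDisj (map (\<lambda>t. phi (snd (snd t)))
                                          (filter (\<lambda>t. fst t = \<alpha>) T)))) enum_class.enum)"
            using in_enum[of a] by simp
          then have "sat dec True d (Box a (BigDisj (map (\<lambda>t. phi (snd (snd t))) (filter (\<lambda>t. fst t = a) T))))"
            using H unfolding sat_BigConj by blast
          then have "sat dec True d' (BigDisj (map (\<lambda>t. phi (snd (snd t))) (filter (\<lambda>t. fst t = a) T)))"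
            using d' unfolding sat_Box R_def by simp
          then obtain a' v r where t: "(a', v, r) \<in> set T" "a' = a" "sat dec True d' (phi r)"
            unfolding sat_BigDisj by auto
          then show "\<exists>v r. (a, v, r) \<in> set T \<and> den dec r \<le> d'" using IH[OF t(1)] by blast
        qed
      next
        assume H: "\<forall>a. \<forall>d'\<in>snd (dec d a). \<exists>v r. (a, v, r) \<in> set T \<and> den dec r \<le> d'"
        show "sat dec True d (BigConj (map (\<lambda>\<alpha>. Box \<alpha> (BigDisj (map (\<lambda>t. phi (snd (snd t)))
                                          (filter (\<lambda>t. fst t = \<alpha>) T)))) enum_class.enum))"
          unfolding sat_BigConj
        proof
          fix x assume "x \<in> set (map (\<lambda>\<alpha>. Box \<alpha> (BigDisj (map (\<lambda>t. phi (snd (snd t)))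
                                          (filter (\<lambda>t. fst t = \<alpha>) T)))) enum_class.enum)"
          then obtain a where x: "x = Box a (BigDisj (map (\<lambda>t. phi (snd (snd t))) (filter (\<lambda>t. fst t = a) T)))"
            by auto
          show "sat dec True d x" unfolding x sat_Box sat_BigDisj
          proof (intro allI impI)
            fix d' assume "R dec (\<not> True) d a d'"
            then have "d' \<in> snd (dec d a)" by (simp add: R_def)
            then obtain v r where t: "(a, v, r) \<in> set T" "den dec r \<le> d'" using H by blast
            then have "sat dec True d' (phi r)" using IH[OF t(1)] by blast
            moreover have "phi r \<in> set (map (\<lambda>t. phi (snd (snd t))) (filter (\<lambda>t. fst t = a) T))"
              using t(1) by force
            ultimately show "\<exists>x\<in>set (map (\<lambda>t. phi (snd (snd t))) (filter (\<lambda>t. fst t = a) T)). sat dec True d' x"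
              by blast
          qed
        qed
      qed
      have le: "den dec (PSum p1 p2) \<le> d \<longleftrightarrow> (\<forall>a. (\<forall>r. (a, True, r) \<in> set T \<longrightarrow> (\<exists>d'\<in>fst (dec d a). den dec r \<le> d'))
          \<and> (\<forall>d'\<in>snd (dec d a). \<exists>v r. (a, v, r) \<in> set T \<and> den dec r \<le> d'))"
      proof -
        have e: "den dec (PSum p1 p2) \<le> d \<longleftrightarrow> (\<forall>\<alpha>. fst (dec (den dec (PSum p1 p2)) \<alpha>) \<subseteq> fst (dec d \<alpha>)
                 \<and> snd (dec d \<alpha>) \<subseteq> snd (dec (den dec (PSum p1 p2)) \<alpha>))"
          by (rule le_iff[OF B])
        have g: "\<And>\<alpha>. dec (den dec (PSum p1 p2)) \<alpha> = ({y. \<exists>r. (\<alpha>, True, r) \<in> set T \<and> y \<le> den dec r},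
                              {y. \<exists>v r. (\<alpha>, v, r) \<in> set T \<and> den dec r \<le> y})"
          unfolding T_def by (rule dec_den[OF A B])
        show ?thesis unfolding e g fst_conv snd_conv
          using lower_L[OF B, of _ d] by blast
      qed
      show "den dec p \<le> d \<longleftrightarrow> sat dec True d (phi p)"
        unfolding PSum le phi.simps(5) T_def[symmetric] sat.simps(4) c1 c2 by blast
    qed
  qed
qed

theorem lemma3p11:
  fixes dec :: "'d::order \<Rightarrow> ('act::enum \<Rightarrow> 'd set \<times> 'd set)"
    and p :: "'act proc" and d :: 'd
  assumes "bifinite TYPE('d)"
    and "mixed_iso dec"
    and "wf_proc p"
  shows "den dec p \<le> d \<longleftrightarrow> sat dec True d (phi p)"
  using main_aux[OF assms(1,2)] by blast

end
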